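(* For $t\in\mathbb R$ let $a_n=a_n(t)>0$ ($n\ge1$, $a_0=0$) be the recurrence coefficients in $a_{n+1}p_{n+1}(x)=xp_n(x)-a_np_{n-1}(x)$ of the orthonormal polynomials for the weight $\exp(-x^4/4-tx^2)$ on $\mathbb R$. Then for all $n\ge1$: $$a_n^2\big(a_{n-1}^2+a_n^2+a_{n+1}^2\big)+2ta_n^2=n,$$ $$4a_n^3\ddot a_n=(3a_n^4+2ta_n^2-n)(a_n^4+2ta_n^2+n),$$ and $u_n=a_n^2$ satisfies the Painlevé IV equation $$\ddot u=\frac{\dot u^2}{2u}+\frac{3u^3}{2}+4tu^2+2(t^2-\alpha)u+\frac{\beta}{u}\quad\text{with }\alpha=-\frac n2,\ \beta=-\frac{n^2}{2}.$$
   Context: Dots denote $d/dt$. *)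

theory Defs
  imports "HOL-Analysis.Analysis" "HOL-Computational_Algebra.Polynomial"
begin

definition freud_weight :: "real \<Rightarrow> real \<Rightarrow> real" where
  "freud_weight t x = exp (- (x ^ 4) / 4 - t * x ^ 2)"

definition orthonormal_system :: "real \<Rightarrow> (nat \<Rightarrow> real poly) \<Rightarrow> bool" where
  "orthonormal_system t p \<longleftrightarrow>
     (\<forall>n. degree (p n) = n \<and> lead_coeff (p n) > 0) \<and>
     (\<forall>m n. ((\<lambda>x. poly (p m) x * poly (p n) x * freud_weight t x)
               has_integral (if m = n then 1 else 0)) UNIV)"

end

theory Submission
  imports Defs
begin

lemma span_induct:
  fixes P :: "nat \<Rightarrow> real poly"
  assumes deg: "\<And>n. degree (P n) = n" and lc: "\<And>n. lead_coeff (P n) \<noteq> 0"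
    and zero: "Q 0" and step: "\<And>q c n. Q q \<Longrightarrow> Q (q + smult c (P n))"
  shows "Q q"
proof (induction "degree q" arbitrary: q rule: less_induct)
  case less
  define d where "d = degree q"
  define c where "c = lead_coeff q / lead_coeff (P d)"
  define r where "r = q - smult c (P d)"
  have q: "q = r + smult c (P d)" by (simp add: r_def)
  have lcd: "coeff (P d) d \<noteq> 0" using lc[of d] deg[of d] by simp
  have cr: "coeff r d = 0" using lcd deg[of d] by (simp add: r_def c_def d_def)
  have dr: "degree r \<le> d" unfolding r_def d_def
    by (metis deg degree_diff_le degree_smult_le dual_order.trans le_refl)
  have "r = 0 \<or> degree r < d"
  proof (cases "r = 0")
    case False
    then have "coeff r (degree r) \<noteq> 0" by simp
    with cr dr have "degree r < d" by (metis le_neq_implies_less)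
    then show ?thesis by simp
  qed simp
  then have "Q r" using less zero d_def by blast
  then show ?case using step q by metis
qed

lemma orth_int:
  assumes o: "orthonormal_system t P"
  shows "(\<lambda>x. poly q x * poly r x * freud_weight t x) integrable_on UNIV"
proof -
  have deg: "\<And>n. degree (P n) = n" and lcp: "\<And>n. lead_coeff (P n) > 0"
    using o unfolding orthonormal_system_def by blast+
  have lc: "\<And>n. lead_coeff (P n) \<noteq> 0" using lcp by (metis less_irrefl)
  have ii: "\<And>m n. (\<lambda>x. poly (P m) x * poly (P n) x * freud_weight t x) integrable_on UNIV"
    using o unfolding orthonormal_system_def by blast
  have A: "\<forall>n. (\<lambda>x. poly q x * poly (P n) x * freud_weight t x) integrable_on UNIV" for q
  proof (rule span_induct[OF deg lc, of _ q])
    fix q c m assume h: "\<forall>n. (\<lambda>x. poly q x * poly (P n) x * freud_weight t x) integrable_on UNIV"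
    show "\<forall>n. (\<lambda>x. poly (q + smult c (P m)) x * poly (P n) x * freud_weight t x) integrable_on UNIV"
    proof
      fix n
      have "(\<lambda>x. poly q x * poly (P n) x * freud_weight t x + c * (poly (P m) x * poly (P n) x * freud_weight t x)) integrable_on UNIV"
        using h ii by (intro integrable_add integrable_on_mult_right) auto
      then show "(\<lambda>x. poly (q + smult c (P m)) x * poly (P n) x * freud_weight t x) integrable_on UNIV"
        by (simp add: algebra_simps)
    qed
  qed (simp add: integrable_0)
  show ?thesis
  proof (rule span_induct[OF deg lc, of "\<lambda>r. (\<lambda>x. poly q x * poly r x * freud_weight t x) integrable_on UNIV" r])
    fix r c m assume h: "(\<lambda>x. poly q x * poly r x * freud_weight t x) integrable_on UNIV"
    have "(\<lambda>x. poly q x * poly r x * freud_weight t x + c * (poly q x * poly (P m) x * freud_weight t x)) integrable_on UNIV"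
      using h A by (intro integrable_add integrable_on_mult_right) auto
    then show "(\<lambda>x. poly q x * poly (r + smult c (P m)) x * freud_weight t x) integrable_on UNIV"
      by (simp add: algebra_simps)
  qed (simp add: integrable_0)
qed


lemma poly_sum_le:
  fixes q :: "real poly"
  assumes "degree q \<le> M"
  shows "poly q x = (\<Sum>i\<le>M. coeff q i * x ^ i)"
proof -
  have "poly q x = (\<Sum>i\<le>degree q. coeff q i * x ^ i)" by (rule poly_altdef)
  also have "\<dots> = (\<Sum>i\<le>M. coeff q i * x ^ i)"
    by (rule sum.mono_neutral_left) (use assms in \<open>auto simp: coeff_eq_0\<close>)
  finally show ?thesis .
qed

definition mom :: "nat \<Rightarrow> real \<Rightarrow> real" where
  "mom k t = integral UNIV (\<lambda>x. x ^ k * freud_weight t x)"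

definition Lf :: "real \<Rightarrow> real poly \<Rightarrow> real" where
  "Lf t q = integral UNIV (\<lambda>x. poly q x * freud_weight t x)"

lemma weight_shift: "freud_weight (t + h) x = freud_weight t x * exp (- h * x ^ 2)"
  unfolding freud_weight_def by (simp add: exp_add[symmetric] algebra_simps)

lemma exp_taylor_bound:
  fixes y :: real
  shows "\<bar>exp y - 1 - y\<bar> \<le> y ^ 2 * exp \<bar>y\<bar>"
proof -
  obtain th where th: "\<bar>th\<bar> \<le> \<bar>y\<bar>" "exp y = (\<Sum>m<2. y ^ m / fact m) + exp th / fact 2 * y ^ 2"
    using Maclaurin_exp_le[of y 2] by blast
  have e: "exp y - 1 - y = exp th / 2 * y ^ 2" using th(2) by (simp add: eval_nat_numeral)
  have "exp th \<le> exp \<bar>y\<bar>" using th(1) by simp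
  then have "exp th / 2 * y ^ 2 \<le> y ^ 2 * exp \<bar>y\<bar>"
  proof -
    have "exp th / 2 * y ^ 2 \<le> exp th * y ^ 2" by (intro mult_right_mono) auto
    also have "\<dots> \<le> exp \<bar>y\<bar> * y ^ 2" by (intro mult_right_mono) (use \<open>exp th \<le> exp \<bar>y\<bar>\<close> in auto)
    finally show ?thesis by (simp add: mult.commute)
  qed
  moreover have "exp th / 2 * y ^ 2 \<ge> 0" by simp
  ultimately show ?thesis unfolding e by linarith
qed

lemma abs_pow_le: "\<bar>x::real\<bar> ^ j \<le> 1 + x ^ (2 * j)"
proof (cases "\<bar>x\<bar> \<le> 1")
  case True
  then have "\<bar>x\<bar> ^ j \<le> 1" by (simp add: power_le_one)
  moreover have "0 \<le> (x ^ 2) ^ j" by simp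
  then have "x ^ (2 * j) \<ge> 0" by (simp only: power_mult)
  ultimately show ?thesis by linarith
next
  case False
  then have "\<bar>x\<bar> ^ j \<le> \<bar>x\<bar> ^ (2 * j)" by (intro power_increasing) auto
  also have "\<dots> = x ^ (2 * j)" by (rule power_even_abs) simp
  finally show ?thesis by simp
qed

locale freud =
  fixes p :: "real \<Rightarrow> nat \<Rightarrow> real poly"
    and a :: "nat \<Rightarrow> real \<Rightarrow> real"
  assumes orth: "\<And>t. orthonormal_system t (p t)"
    and a0: "\<And>t. a 0 t = 0"
    and apos: "\<And>n t. n \<ge> 1 \<Longrightarrow> a n t > 0"
    and recur: "\<And>n t. smult (a (n + 1) t) (p t (n + 1))
                   = [:0, 1:] * p t n - smult (a n t) (p t (n - 1))"
begin

lemma int_qr: "(\<lambda>x. poly q x * poly r x * freud_weight t x) integrable_on UNIV"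
  by (rule orth_int[OF orth])

lemma int_q: "(\<lambda>x. poly q x * freud_weight t x) integrable_on UNIV"
  using int_qr[of q 1 t] by simp

lemma int_pow: "(\<lambda>x. x ^ k * freud_weight t x) integrable_on UNIV"
  using int_q[of "monom 1 k" t] by (simp add: poly_monom)

lemma has_int_pow: "((\<lambda>x. x ^ k * freud_weight t x) has_integral mom k t) UNIV"
  unfolding mom_def using int_pow by (rule integrable_integral)

lemma has_int_Lf: "((\<lambda>x. poly q x * freud_weight t x) has_integral Lf t q) UNIV"
  unfolding Lf_def using int_q by (rule integrable_integral)

lemma Lf_sum_gen:
  assumes "degree q \<le> M"
  shows "((\<lambda>x. x ^ e * poly q x * freud_weight t x) has_integral (\<Sum>i\<le>M. coeff q i * mom (i + e) t)) UNIV"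
proof -
  have "((\<lambda>x. \<Sum>i\<le>M. coeff q i * (x ^ (i + e) * freud_weight t x)) has_integral (\<Sum>i\<le>M. coeff q i * mom (i + e) t)) UNIV"
    by (intro has_integral_sum has_integral_mult_right has_int_pow) auto
  moreover have "(\<Sum>i\<le>M. coeff q i * (x ^ (i + e) * freud_weight t x)) = x ^ e * poly q x * freud_weight t x" for x
    by (simp add: poly_sum_le[OF assms] sum_distrib_left sum_distrib_right power_add algebra_simps)
  ultimately show ?thesis by simp
qed

lemma Lf_sum:
  assumes "degree q \<le> M"
  shows "Lf t q = (\<Sum>i\<le>M. coeff q i * mom i t)"
  using Lf_sum_gen[OF assms, where e=0 and t=t] has_int_Lf[of q t] by (simp add: has_integral_unique)

lemma Lf_add: "Lf t (q + r) = Lf t q + Lf t r"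
  unfolding Lf_def by (simp add: distrib_right integral_add int_q)

lemma Lf_smult: "Lf t (smult c q) = c * Lf t q"
  unfolding Lf_def by (simp add: mult.assoc)

lemma Lf_diff: "Lf t (q - r) = Lf t q - Lf t r"
  unfolding Lf_def by (simp add: left_diff_distrib integral_diff int_q)

lemma Lf_orth: "Lf t (p t m * p t n) = (if m = n then 1 else 0)"
proof -
  have "((\<lambda>x. poly (p t m) x * poly (p t n) x * freud_weight t x) has_integral (if m = n then 1 else 0)) UNIV"
    using orth[of t] unfolding orthonormal_system_def by blast
  then show ?thesis unfolding Lf_def by (simp add: integral_unique)
qed

lemma mom_deriv: "(mom k has_real_derivative - mom (k + 2) t) (at t)"
proof -
  define B where "B x = (1 + x ^ (2 * (k + 4))) * freud_weight (t - 1) x" for x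
  have Bint: "B integrable_on UNIV"
    unfolding B_def distrib_right using int_pow[of 0 "t - 1"] int_pow[of "2 * (k + 4)" "t - 1"]
    by (intro integrable_add) auto
  define C where "C = integral UNIV B"
  define g where "g h = (mom k (t + h) - mom k t) / h + mom (k + 2) t" for h
  define phi where "phi h x = (1 / h) * (x ^ k * freud_weight (t + h) x - x ^ k * freud_weight t x)
                     + x ^ (k + 2) * freud_weight t x" for h x
  have phi_int: "(phi h has_integral g h) UNIV" for h
  proof -
    have "(phi h has_integral ((1 / h) * (mom k (t + h) - mom k t) + mom (k + 2) t)) UNIV"
      unfolding phi_def
      by (intro has_integral_add has_integral_mult_right has_integral_diff has_int_pow)
    then show ?thesis unfolding g_def by simp
  qed
  have bound: "\<bar>phi h x\<bar> \<le> \<bar>h\<bar> * B x" if h: "h \<noteq> 0" "\<bar>h\<bar> < 1" for h x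
  proof -
    define y where "y = - h * x ^ 2"
    have e1: "(exp y - 1 - y) / h = (exp y - 1) / h + x ^ 2" using h by (simp add: y_def field_simps)
    have "phi h x = (1 / h) * (x ^ k * (freud_weight t x * exp y) - x ^ k * freud_weight t x) + x ^ (k + 2) * freud_weight t x"
      unfolding phi_def weight_shift y_def by simp
    also have "\<dots> = x ^ k * freud_weight t x * ((exp y - 1) / h + x ^ 2)"
      by (simp add: diff_divide_distrib right_diff_distrib distrib_left power_add power2_eq_square mult_ac)
    also have "\<dots> = x ^ k * freud_weight t x * ((exp y - 1 - y) / h)" by (simp add: e1)
    finally have "phi h x = x ^ k * freud_weight t x * ((exp y - 1 - y) / h)" .
    also have "\<bar>\<dots>\<bar> = \<bar>x\<bar> ^ k * freud_weight t x * (\<bar>exp y - 1 - y\<bar> / \<bar>h\<bar>)"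
      by (simp add: abs_mult power_abs freud_weight_def)
    also have "\<dots> \<le> \<bar>x\<bar> ^ k * freud_weight t x * (y ^ 2 * exp \<bar>y\<bar> / \<bar>h\<bar>)"
      by (intro mult_left_mono divide_right_mono exp_taylor_bound) (auto simp: freud_weight_def)
    also have "\<dots> = \<bar>h\<bar> * (\<bar>x\<bar> ^ (k + 4) * (freud_weight t x * exp (\<bar>h\<bar> * x ^ 2)))"
    proof -
      have y2: "y ^ 2 = (h * h) * (x ^ 4)" unfolding y_def by (simp add: eval_nat_numeral)
      have ay: "\<bar>y\<bar> = \<bar>h\<bar> * x ^ 2" unfolding y_def by (simp add: abs_mult)
      have hh0: "h * h = \<bar>h\<bar> * \<bar>h\<bar>" by (rule abs_mult_self_eq[symmetric])
      have ne: "\<bar>h\<bar> \<noteq> 0" using h(1) by simp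
      have hh: "h * h / \<bar>h\<bar> = \<bar>h\<bar>" by (simp only: hh0 nonzero_mult_div_cancel_left[OF ne])
      have x4: "\<bar>x\<bar> ^ (k + 4) = \<bar>x\<bar> ^ k * x ^ 4" by (simp add: power_add power_abs[symmetric] eval_nat_numeral)
      have "y ^ 2 * exp \<bar>y\<bar> / \<bar>h\<bar> = (h * h / \<bar>h\<bar>) * x ^ 4 * exp (\<bar>h\<bar> * x ^ 2)"
        by (simp add: y2 ay)
      then show ?thesis by (simp add: hh x4 mult_ac)
    qed
    also have "\<dots> \<le> \<bar>h\<bar> * ((1 + x ^ (2 * (k + 4))) * freud_weight (t - 1) x)"
    proof (intro mult_left_mono mult_mono abs_pow_le)
      have "freud_weight t x * exp (\<bar>h\<bar> * x ^ 2) = exp (- (x ^ 4) / 4 - (t - \<bar>h\<bar>) * x ^ 2)"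
        unfolding freud_weight_def by (simp add: exp_add[symmetric] algebra_simps)
      also have "\<dots> \<le> freud_weight (t - 1) x"
        unfolding freud_weight_def using h by (intro exp_mono) (auto intro!: mult_right_mono)
      finally show "freud_weight t x * exp (\<bar>h\<bar> * x ^ 2) \<le> freud_weight (t - 1) x" .
    next
      have "0 \<le> x ^ (2 * (k + 4))" by (rule zero_le_even_power) simp
      then show "0 \<le> 1 + x ^ (2 * (k + 4))" by simp
    qed (auto simp: freud_weight_def)
    finally show ?thesis by (simp add: B_def)
  qed
  have gb: "\<bar>g h\<bar> \<le> \<bar>h\<bar> * C" if h: "h \<noteq> 0" "\<bar>h\<bar> < 1" for h
  proof -
    have "\<bar>g h\<bar> = norm (integral UNIV (phi h))" using phi_int[of h] by (simp add: integral_unique)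
    also have "\<dots> \<le> integral UNIV (\<lambda>x. \<bar>h\<bar> * B x)"
      using phi_int[of h] bound[OF h] Bint
      by (intro integral_norm_bound_integral) (auto intro: integrable_on_mult_right)
    also have "\<dots> = \<bar>h\<bar> * C" unfolding C_def by simp
    finally show ?thesis .
  qed
  have "(g \<longlongrightarrow> 0) (at 0)"
  proof (rule Lim_null_comparison)
    show "\<forall>\<^sub>F h in at 0. norm (g h) \<le> \<bar>h\<bar> * C"
      unfolding eventually_at using gb by (intro exI[of _ 1]) auto
    show "((\<lambda>h. \<bar>h\<bar> * C) \<longlongrightarrow> 0) (at 0)"
      by (intro tendsto_eq_intros) auto
  qed
  then have "((\<lambda>h. g h - mom (k + 2) t) \<longlongrightarrow> 0 - mom (k + 2) t) (at 0)"
    by (intro tendsto_intros)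
  then show ?thesis unfolding DERIV_def g_def by simp
qed

end

definition pdiff :: "(real \<Rightarrow> real poly) \<Rightarrow> real poly \<Rightarrow> real \<Rightarrow> bool" where
  "pdiff Q D t \<longleftrightarrow> (\<forall>i. ((\<lambda>s. coeff (Q s) i) has_real_derivative coeff D i) (at t))"

lemma pdiff_add: "pdiff Q1 D1 t \<Longrightarrow> pdiff Q2 D2 t \<Longrightarrow> pdiff (\<lambda>s. Q1 s + Q2 s) (D1 + D2) t"
  unfolding pdiff_def by (auto intro!: DERIV_add)

lemma pdiff_diff: "pdiff Q1 D1 t \<Longrightarrow> pdiff Q2 D2 t \<Longrightarrow> pdiff (\<lambda>s. Q1 s - Q2 s) (D1 - D2) t"
  unfolding pdiff_def by (auto intro!: DERIV_diff)

lemma pdiff_smult: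
  assumes "(f has_real_derivative f') (at t)" "pdiff Q D t"
  shows "pdiff (\<lambda>s. smult (f s) (Q s)) (smult f' (Q t) + smult (f t) D) t"
  unfolding pdiff_def
proof
  fix i
  have "((\<lambda>s. f s * coeff (Q s) i) has_real_derivative f t * coeff D i + f' * coeff (Q t) i) (at t)"
    using assms unfolding pdiff_def by (intro DERIV_mult') auto
  then show "((\<lambda>s. coeff (smult (f s) (Q s)) i) has_real_derivative coeff (smult f' (Q t) + smult (f t) D) i) (at t)"
    by (simp add: algebra_simps)
qed

lemma X_mult_coeff: "coeff ([:0, 1:] * (q :: real poly)) i = (if i = 0 then 0 else coeff q (i - 1))"
  by (cases i) auto

lemma pdiff_X:
  assumes "pdiff Q D t"
  shows "pdiff (\<lambda>s. [:0, 1:] * Q s) ([:0, 1:] * D) t"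
  using assms unfolding pdiff_def X_mult_coeff by auto

lemma pdiff_mult:
  assumes "pdiff P D1 t" "pdiff Q D2 t"
  shows "pdiff (\<lambda>s. P s * Q s) (D1 * Q t + P t * D2) t"
  unfolding pdiff_def
proof
  fix n
  have "((\<lambda>s. \<Sum>i\<le>n. coeff (P s) i * coeff (Q s) (n - i)) has_real_derivative
        (\<Sum>i\<le>n. coeff (P t) i * coeff D2 (n - i) + coeff D1 i * coeff (Q t) (n - i))) (at t)"
    using assms unfolding pdiff_def by (intro DERIV_sum DERIV_mult') auto
  moreover have "coeff (D1 * Q t + P t * D2) n = (\<Sum>i\<le>n. coeff D1 i * coeff (Q t) (n - i)) + (\<Sum>i\<le>n. coeff (P t) i * coeff D2 (n - i))"
    by (simp only: coeff_add coeff_mult)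
  ultimately show "((\<lambda>s. coeff (P s * Q s) n) has_real_derivative coeff (D1 * Q t + P t * D2) n) (at t)"
    by (simp only: coeff_mult sum.distrib[symmetric]) (simp add: algebra_simps)
qed


lemma pdiff_degree:
  assumes "\<And>s. degree (Q s) \<le> N" "pdiff Q D t"
  shows "degree D \<le> N"
proof (rule degree_le, intro allI impI)
  fix i assume i: "N < i"
  have "coeff (Q s) i = 0" for s
    using assms(1)[of s] i by (intro coeff_eq_0) linarith
  then have "(\<lambda>s. coeff (Q s) i) = (\<lambda>s. 0)" by auto
  then have "((\<lambda>s. 0) has_real_derivative coeff D i) (at t)"
    using assms(2) unfolding pdiff_def by metis
  then show "coeff D i = 0" using DERIV_const DERIV_unique by blast
qed

definition dP :: "(real \<Rightarrow> real poly) \<Rightarrow> nat \<Rightarrow> real \<Rightarrow> real poly" where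
  "dP Q N t = (\<Sum>i\<le>N. monom (deriv (\<lambda>s. coeff (Q s) i) t) i)"

lemma coeff_dP: "coeff (dP Q N t) i = (if i \<le> N then deriv (\<lambda>s. coeff (Q s) i) t else 0)"
  unfolding dP_def by (simp add: coeff_sum coeff_monom)

lemma pdiff_dP:
  assumes "\<And>s. degree (Q s) \<le> N" "\<And>i. (\<lambda>s. coeff (Q s) i) differentiable (at t)"
  shows "pdiff Q (dP Q N t) t"
  unfolding pdiff_def
proof
  fix i
  show "((\<lambda>s. coeff (Q s) i) has_real_derivative coeff (dP Q N t) i) (at t)"
  proof (cases "i \<le> N")
    case True
    then show ?thesis using assms(2)[of i] by (simp add: coeff_dP DERIV_deriv_iff_real_differentiable)
  next
    case False
    have "coeff (Q s) i = 0" for s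
      using assms(1)[of s] False by (intro coeff_eq_0) linarith
    then have "(\<lambda>s. coeff (Q s) i) = (\<lambda>s. 0)" by auto
    then show ?thesis using False by (simp add: coeff_dP)
  qed
qed

context freud
begin

lemma Lf_x2: "Lf t ([:0, 0, 1:] * q) = (\<Sum>i\<le>M. coeff q i * mom (i + 2) t)" if "degree q \<le> M"
proof -
  have "((\<lambda>x. x ^ 2 * poly q x * freud_weight t x) has_integral (\<Sum>i\<le>M. coeff q i * mom (i + 2) t)) UNIV"
    by (rule Lf_sum_gen[OF that])
  moreover have eq: "(\<lambda>x. poly ([:0, 0, 1:] * q) x * freud_weight t x) = (\<lambda>x. x ^ 2 * poly q x * freud_weight t x)"
    by (auto simp: power2_eq_square)
  have "((\<lambda>x. x ^ 2 * poly q x * freud_weight t x) has_integral Lf t ([:0, 0, 1:] * q)) UNIV"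
    using has_int_Lf[of "[:0, 0, 1:] * q" t] unfolding eq .
  ultimately show ?thesis by (rule has_integral_unique[rotated])
qed

lemma Lf_pdiff:
  assumes deg: "\<And>s. degree (Q s) \<le> N" and pd: "pdiff Q D t"
  shows "((\<lambda>s. Lf s (Q s)) has_real_derivative (Lf t D - Lf t ([:0, 0, 1:] * Q t))) (at t)"
proof -
  have eq: "(\<lambda>s. Lf s (Q s)) = (\<lambda>s. \<Sum>i\<le>N. coeff (Q s) i * mom i s)"
    using Lf_sum[OF deg] by auto
  have "((\<lambda>s. \<Sum>i\<le>N. coeff (Q s) i * mom i s) has_real_derivative
          (\<Sum>i\<le>N. coeff (Q t) i * (- mom (i + 2) t) + coeff D i * mom i t)) (at t)"
    using pd mom_deriv unfolding pdiff_def by (intro DERIV_sum DERIV_mult') auto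
  moreover have "Lf t D = (\<Sum>i\<le>N. coeff D i * mom i t)"
    by (rule Lf_sum[OF pdiff_degree[OF deg pd]])
  moreover have "Lf t ([:0, 0, 1:] * Q t) = (\<Sum>i\<le>N. coeff (Q t) i * mom (i + 2) t)"
    by (rule Lf_x2[OF deg])
  ultimately show ?thesis unfolding eq by (simp add: sum.distrib sum_subtractf algebra_simps)
qed

lemma deg_p: "degree (p t n) = n"
  using orth[of t] unfolding orthonormal_system_def by blast

lemma lc_p: "coeff (p t n) n > 0"
  using orth[of t] unfolding orthonormal_system_def by (metis deg_p)

lemma Lf_smult2: "Lf t (smult c q * smult c q) = c ^ 2 * Lf t (q * q)"
  by (simp add: Lf_smult power2_eq_square mult.assoc)

lemma a_sq: "a (n + 1) t ^ 2 = Lf t (([:0, 1:] * p t n - smult (a n t) (p t (n - 1))) * ([:0, 1:] * p t n - smult (a n t) (p t (n - 1))))"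
proof -
  have "[:0, 1:] * p t n - smult (a n t) (p t (n - 1)) = smult (a (n + 1) t) (p t (n + 1))"
    using recur[of "n" t] by simp
  then show ?thesis
    using Lf_smult2[of t "a (n + 1) t" "p t (n + 1)"] Lf_orth[of t "n + 1" "n + 1"] by simp
qed

lemma p0_const: "p t 0 = [:coeff (p t 0) 0:]"
  using degree_0_id[OF deg_p[of t 0]] by simp

lemma diff_all: "(\<forall>i t. (\<lambda>s. coeff (p s n) i) differentiable (at t)) \<and> (\<forall>t. a n differentiable (at t))"
proof (induction n rule: less_induct)
  case (less n)
  show ?case
  proof (cases n)
    case 0
    have a0d: "a 0 differentiable (at t)" for t
    proof -
      have "a 0 = (\<lambda>s. 0)" using a0 by auto
      then show ?thesis by simp
    qed
    have c: "coeff (p s 0) 0 = inverse (sqrt (mom 0 s))" for s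
    proof -
      define c where "c = coeff (p s 0) 0"
      have cpos: "c > 0" using lc_p[of s 0] by (simp add: c_def)
      have "1 = Lf s (p s 0 * p s 0)" using Lf_orth[of s 0 0] by simp
      also have "\<dots> = c * c * mom 0 s"
        by (subst p0_const, subst p0_const) (simp add: Lf_sum[of _ 0] c_def)
      finally have "c ^ 2 * mom 0 s = 1" by (simp add: power2_eq_square)
      then have "mom 0 s = 1 / c ^ 2" using cpos by (simp add: field_simps)
      then have "sqrt (mom 0 s) = 1 / c" using cpos by (simp add: real_sqrt_divide)
      then show ?thesis by (simp add: c_def)
    qed
    have mpos: "mom 0 s > 0" for s
    proof -
      have "coeff (p s 0) 0 > 0" using lc_p[of s 0] by simp
      then show ?thesis using c[of s] by (metis inverse_positive_iff_positive real_sqrt_gt_0_iff real_sqrt_lt_0_iff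
            linorder_neqE_linordered_idom not_less_iff_gr_or_eq real_sqrt_zero inverse_zero)
    qed
    have cd: "(\<lambda>s. coeff (p s 0) i) differentiable (at t)" for i t
    proof (cases i)
      case 0
      have "((\<lambda>s. inverse (sqrt (mom 0 s))) has_real_derivative
              - ((inverse (sqrt (mom 0 t)) / 2 * - mom 2 t) * inverse (sqrt (mom 0 t) ^ Suc (Suc 0)))) (at t)"
      proof -
        have md: "(mom 0 has_real_derivative - mom 2 t) (at t)" using mom_deriv[of 0 t] by (simp only: add_0)
        show ?thesis using mpos[of t] md
          by (intro DERIV_inverse_fun DERIV_chain2[OF DERIV_real_sqrt]) auto
      qed
      then show ?thesis using 0 c unfolding real_differentiable_def by auto
    next
      case (Suc j)
      then have "(\<lambda>s. coeff (p s 0) i) = (\<lambda>s. 0)"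
        using deg_p by (auto intro!: coeff_eq_0)
      then show ?thesis by simp
    qed
    show ?thesis using 0 a0d cd by auto
  next
    case (Suc m)
    have IHm: "\<And>i t. (\<lambda>s. coeff (p s m) i) differentiable (at t)" "\<And>t. a m differentiable (at t)"
      using less[of m] Suc by auto
    have IHm1: "\<And>i t. (\<lambda>s. coeff (p s (m - 1)) i) differentiable (at t)"
      using less[of "m - 1"] Suc by auto
    define q where "q s = [:0, 1:] * p s m - smult (a m s) (p s (m - 1))" for s
    have degq: "degree (q s) \<le> m + 1" for s
      unfolding q_def using deg_p
      by (intro degree_diff_le) (auto intro: order.trans[OF degree_mult_le] order.trans[OF degree_smult_le])
    have degqq: "degree (q s * q s) \<le> 2 * m + 2" for s
      using degq[of s] by (intro order.trans[OF degree_mult_le]) auto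
    define Dq where "Dq t = [:0, 1:] * dP (\<lambda>s. p s m) m t - (smult (deriv (a m) t) (p t (m - 1)) + smult (a m t) (dP (\<lambda>s. p s (m - 1)) (m - 1) t))" for t
    have pdq: "pdiff q (Dq t) t" for t
      unfolding q_def Dq_def using IHm IHm1 deg_p
      by (intro pdiff_diff pdiff_X pdiff_smult pdiff_dP) (auto simp: DERIV_deriv_iff_real_differentiable)
    have qd: "(\<lambda>s. coeff (q s) i) differentiable (at t)" for i t
      using pdq[of t] unfolding pdiff_def real_differentiable_def by blast
    have asq: "a n s ^ 2 = Lf s (q s * q s)" for s
      using a_sq[of m s] Suc unfolding q_def by simp
    have an_pos: "a n s > 0" for s using apos Suc by simp
    have an: "a n s = sqrt (Lf s (q s * q s))" for s
      using asq[of s] an_pos[of s] by (metis abs_of_pos real_sqrt_abs)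
    have Lpos: "Lf s (q s * q s) > 0" for s using asq[of s] an_pos[of s] by (metis zero_less_power)
    have ad: "a n differentiable (at t)" for t
    proof -
      obtain D where D: "((\<lambda>s. Lf s (q s * q s)) has_real_derivative D) (at t)"
        using Lf_pdiff[OF degqq pdiff_mult[OF pdq pdq]] by blast
      have "((\<lambda>s. sqrt (Lf s (q s * q s))) has_real_derivative inverse (sqrt (Lf t (q t * q t))) / 2 * D) (at t)"
        using Lpos[of t] D by (intro DERIV_chain2[OF DERIV_real_sqrt]) auto
      moreover have "a n = (\<lambda>s. sqrt (Lf s (q s * q s)))" using an by auto
      ultimately show ?thesis unfolding real_differentiable_def by auto
    qed
    have pc: "coeff (p s n) i = coeff (q s) i / a n s" for s i
    proof -
      have "smult (a n s) (p s n) = q s" using recur[of m s] Suc unfolding q_def by simp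
      then have "a n s * coeff (p s n) i = coeff (q s) i" by (metis coeff_smult)
      then show ?thesis using an_pos[of s] by (simp add: field_simps)
    qed
    have cd: "(\<lambda>s. coeff (p s n) i) differentiable (at t)" for i t
    proof -
      have "(\<lambda>s. coeff (q s) i / a n s) differentiable (at t)"
        using an_pos[of t] by (intro differentiable_divide qd ad) auto
      then show ?thesis unfolding pc .
    qed
    show ?thesis using cd ad by auto
  qed
qed

end

lemma w_pos: "freud_weight t x > 0"
  unfolding freud_weight_def by simp

lemma w_even_lim: "((\<lambda>x. x ^ (2 * k) * freud_weight t x) \<longlongrightarrow> 0) at_infinity"
proof (rule Lim_null_comparison)
  have lim1: "((\<lambda>y. y ^ k / exp y) \<longlongrightarrow> (0::real)) at_top" by (rule tendsto_power_div_exp_0)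
  have lim2: "filterlim (\<lambda>x::real. norm x ^ 2) at_top at_infinity"
    by (intro filterlim_pow_at_top filterlim_norm_at_top) auto
  have "((\<lambda>x::real. (norm x ^ 2) ^ k / exp (norm x ^ 2)) \<longlongrightarrow> 0) at_infinity"
    by (rule filterlim_compose[OF lim1 lim2])
  then show "((\<lambda>x::real. (x ^ 2) ^ k / exp (x ^ 2)) \<longlongrightarrow> 0) at_infinity" by simp
  show "\<forall>\<^sub>F x in at_infinity. norm (x ^ (2 * k) * freud_weight t x) \<le> (x ^ 2) ^ k / exp (x ^ 2)"
    unfolding eventually_at_infinity
  proof (intro exI[of _ "2 + 2 * \<bar>t\<bar>"] allI impI)
    fix x :: real assume x: "2 + 2 * \<bar>t\<bar> \<le> norm x"
    have "(2 + 2 * \<bar>t\<bar>) ^ 2 \<le> \<bar>x\<bar> ^ 2" using x by (intro power_mono) auto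
    moreover have "4 * (1 - t) \<le> 4 + 8 * \<bar>t\<bar>" by (cases "t \<ge> 0") auto
    moreover have "4 + 8 * \<bar>t\<bar> \<le> (2 + 2 * \<bar>t\<bar>) ^ 2" by (simp add: power2_eq_square algebra_simps)
    ultimately have x2: "4 * (1 - t) \<le> x ^ 2" by simp
    have "- (x ^ 4) / 4 - t * x ^ 2 \<le> - (x ^ 2)"
    proof -
      have "x ^ 2 * (x ^ 2 / 4 + t - 1) \<ge> 0" using x2 by (intro mult_nonneg_nonneg) auto
      then show ?thesis by (simp add: algebra_simps power2_eq_square eval_nat_numeral)
    qed
    then have "freud_weight t x \<le> exp (- (x ^ 2))" unfolding freud_weight_def by simp
    then have "x ^ (2 * k) * freud_weight t x \<le> (x ^ 2) ^ k * exp (- (x ^ 2))"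
      by (simp add: power_mult mult_left_mono)
    moreover have "x ^ (2 * k) * freud_weight t x \<ge> 0"
      using w_pos[of t x] by (simp add: power_mult)
    ultimately show "norm (x ^ (2 * k) * freud_weight t x) \<le> (x ^ 2) ^ k / exp (x ^ 2)"
      by (simp add: exp_minus field_simps)
  qed
qed

lemma w_pow_lim: "((\<lambda>x. x ^ k * freud_weight t x) \<longlongrightarrow> 0) at_infinity"
proof (rule Lim_null_comparison)
  show "\<forall>\<^sub>F x in at_infinity. norm (x ^ k * freud_weight t x) \<le> x ^ (2 * 0) * freud_weight t x + x ^ (2 * k) * freud_weight t x"
  proof (intro always_eventually allI)
    fix x :: real
    have "norm (x ^ k * freud_weight t x) = \<bar>x\<bar> ^ k * freud_weight t x"
      using w_pos[of t x] by (simp add: abs_mult power_abs)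
    also have "\<dots> \<le> (1 + x ^ (2 * k)) * freud_weight t x"
      using w_pos[of t x] abs_pow_le[of x k] by (intro mult_right_mono) auto
    finally show "norm (x ^ k * freud_weight t x) \<le> x ^ (2 * 0) * freud_weight t x + x ^ (2 * k) * freud_weight t x"
      by (simp add: algebra_simps)
  qed
  show "((\<lambda>x. x ^ (2 * 0) * freud_weight t x + x ^ (2 * k) * freud_weight t x) \<longlongrightarrow> 0) at_infinity"
    using tendsto_add[OF w_even_lim[of 0 t] w_even_lim[of k t]] by simp
qed

lemma poly_w_lim: "((\<lambda>x. poly q x * freud_weight t x) \<longlongrightarrow> 0) at_infinity"
proof -
  have "((\<lambda>x. \<Sum>i\<le>degree q. coeff q i * (x ^ i * freud_weight t x)) \<longlongrightarrow> 0) at_infinity"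
    by (intro tendsto_null_sum tendsto_mult_right_zero w_pow_lim)
  moreover have "(\<Sum>i\<le>degree q. coeff q i * (x ^ i * freud_weight t x)) = poly q x * freud_weight t x" for x
    by (simp add: poly_altdef sum_distrib_right mult.assoc)
  ultimately show ?thesis by simp
qed

lemma w_deriv: "(freud_weight t has_real_derivative freud_weight t x * (- (x ^ 3) - 2 * t * x)) (at x)"
  unfolding freud_weight_def[abs_def]
  by (rule derivative_eq_intros refl | simp)+

context freud
begin

lemma Lf_zero: "Lf t 0 = 0" by (simp add: Lf_def)

lemma ibp: "Lf t (pderiv q) = Lf t (q * [:0, 2 * t, 0, 1:])"
proof -
  define F where "F x = poly q x * freud_weight t x" for x
  define G where "G = pderiv q - q * [:0, 2 * t, 0, 1:]"
  have Fd: "(F has_real_derivative poly G x * freud_weight t x) (at x)" for x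
  proof -
    have "(F has_real_derivative poly q x * (freud_weight t x * (- (x ^ 3) - 2 * t * x)) + poly (pderiv q) x * freud_weight t x) (at x)"
      unfolding F_def[abs_def] by (rule DERIV_mult'[OF poly_DERIV w_deriv])
    moreover have "poly q x * (freud_weight t x * (- (x ^ 3) - 2 * t * x)) + poly (pderiv q) x * freud_weight t x = poly G x * freud_weight t x"
      by (simp add: G_def algebra_simps eval_nat_numeral)
    ultimately show ?thesis by simp
  qed
  define I where "I = Lf t G"
  have hI: "((\<lambda>x. poly G x * freud_weight t x) has_integral I) UNIV" unfolding I_def by (rule has_int_Lf)
  have Flim: "(F \<longlongrightarrow> 0) at_infinity" unfolding F_def by (rule poly_w_lim)
  have "\<bar>I\<bar> < 3 * e" if e: "e > 0" for e
  proof -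
    obtain B where B: "B > 0" "\<And>a b. ball 0 B \<subseteq> cbox a b \<Longrightarrow>
        norm (integral (cbox a b) (\<lambda>x. if x \<in> UNIV then poly G x * freud_weight t x else 0) - I) < e"
      using hI e unfolding has_integral_alt'[of _ I UNIV] by meson
    obtain b where b: "\<And>x. b \<le> norm x \<Longrightarrow> norm (F x) < e"
      using Flim e unfolding tendsto_iff eventually_at_infinity by fastforce
    define R where "R = max B b + 1"
    have Rpos: "R > 0" using B(1) by (simp add: R_def)
    have sub: "ball 0 B \<subseteq> cbox (- R) R"
      by (auto simp: R_def mem_ball dist_real_def)
    have ftc: "((\<lambda>x. poly G x * freud_weight t x) has_integral (F R - F (- R))) {- R..R}"
      using Rpos Fd
      by (intro fundamental_theorem_of_calculus)
         (auto simp: has_real_derivative_iff_has_vector_derivative[symmetric] intro: DERIV_subset)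
    have "norm (integral (cbox (- R) R) (\<lambda>x. poly G x * freud_weight t x) - I) < e"
      using B(2)[OF sub] by simp
    then have "\<bar>(F R - F (- R)) - I\<bar> < e" using ftc by (simp add: integral_unique)
    moreover have "\<bar>F R\<bar> < e" "\<bar>F (- R)\<bar> < e" using b[of R] b[of "- R"] by (auto simp: R_def)
    ultimately show ?thesis by linarith
  qed
  note * = this
  have "I = 0"
  proof (rule ccontr)
    assume "I \<noteq> 0"
    then have "\<bar>I\<bar> / 3 > 0" by simp
    from *[OF this] show False by simp
  qed
  then show ?thesis unfolding I_def G_def by (simp add: Lf_diff)
qed

end

definition Xp :: "real poly" where "Xp = [:0, 1:]"

context freud
begin

lemma orth_low: "degree r < n \<Longrightarrow> Lf t (r * p t n) = 0"
proof (induction "degree r" arbitrary: r rule: less_induct)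
  case less
  show ?case
  proof (cases "r = 0")
    case True
    then show ?thesis by (simp add: Lf_zero)
  next
    case False
    define d where "d = degree r"
    define c where "c = lead_coeff r / coeff (p t d) d"
    define r' where "r' = r - smult c (p t d)"
    have kd: "coeff (p t d) d \<noteq> 0" using lc_p[of t d] by simp
    have cr: "coeff r' d = 0" using kd by (simp add: r'_def c_def d_def)
    have dr: "degree r' \<le> d" unfolding r'_def d_def
      by (metis deg_p degree_diff_le degree_smult_le dual_order.trans le_refl)
    have "r' = 0 \<or> degree r' < d"
    proof (cases "r' = 0")
      case False
      then have "coeff r' (degree r') \<noteq> 0" by simp
      with cr dr have "degree r' < d" by (metis le_neq_implies_less)
      then show ?thesis by simp
    qed simp
    then have L0: "Lf t (r' * p t n) = 0"
      using less.hyps[of r'] less.prems d_def Lf_zero by auto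
    have "r * p t n = r' * p t n + smult c (p t d * p t n)" by (simp add: r'_def algebra_simps)
    then have "Lf t (r * p t n) = Lf t (r' * p t n) + c * Lf t (p t d * p t n)"
      by (simp add: Lf_add Lf_smult)
    also have "\<dots> = 0" using L0 Lf_orth[of t d n] less.prems d_def by simp
    finally show ?thesis .
  qed
qed

lemma Lf_top:
  assumes "degree r \<le> n"
  shows "Lf t (r * p t n) = coeff r n / coeff (p t n) n"
proof -
  define c where "c = coeff r n / coeff (p t n) n"
  define r' where "r' = r - smult c (p t n)"
  have kd: "coeff (p t n) n \<noteq> 0" using lc_p[of t n] by simp
  have cr: "coeff r' n = 0" using kd by (simp add: r'_def c_def)
  have dr: "degree r' \<le> n" unfolding r'_def using assms
    by (metis deg_p degree_diff_le degree_smult_le dual_order.trans)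
  have L0: "Lf t (r' * p t n) = 0"
  proof (cases "r' = 0")
    case True
    then show ?thesis by (simp add: Lf_zero)
  next
    case False
    then have "coeff r' (degree r') \<noteq> 0" by simp
    with cr dr have "degree r' < n" by (metis le_neq_implies_less)
    then show ?thesis by (rule orth_low)
  qed
  have "r * p t n = r' * p t n + smult c (p t n * p t n)" by (simp add: r'_def algebra_simps)
  then have "Lf t (r * p t n) = Lf t (r' * p t n) + c * Lf t (p t n * p t n)"
    by (simp add: Lf_add Lf_smult)
  then show ?thesis using L0 Lf_orth[of t n n] by (simp add: c_def)
qed

lemma xp: "Xp * p t n = smult (a (n + 1) t) (p t (n + 1)) + smult (a n t) (p t (n - 1))"
  using recur[of n t] unfolding Xp_def by (metis diff_add_cancel)

lemma Lf_xpp: "Lf t (Xp * p t i * p t j) = (if j = i + 1 then a (i + 1) t else 0) + (if j + 1 = i then a i t else 0)"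
proof -
  have "Xp * p t i * p t j = smult (a (i + 1) t) (p t (i + 1) * p t j) + smult (a i t) (p t (i - 1) * p t j)"
    by (simp add: xp algebra_simps)
  then have "Lf t (Xp * p t i * p t j) = a (i + 1) t * Lf t (p t (i + 1) * p t j) + a i t * Lf t (p t (i - 1) * p t j)"
    by (simp add: Lf_add Lf_smult)
  also have "\<dots> = (if j = i + 1 then a (i + 1) t else 0) + (if j + 1 = i then a i t else 0)"
  proof (cases i)
    case 0
    then show ?thesis by (simp add: Lf_orth a0)
  next
    case (Suc i')
    then show ?thesis by (auto simp: Lf_orth)
  qed
  finally show ?thesis .
qed

lemma Lf_xpp4:
  "Lf t (Xp * (smult A (p t i) + smult B (p t j)) * (smult C (p t k) + smult D (p t l))) =
     A * C * Lf t (Xp * p t i * p t k) + A * D * Lf t (Xp * p t i * p t l)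
   + B * C * Lf t (Xp * p t j * p t k) + B * D * Lf t (Xp * p t j * p t l)"
proof -
  have "Xp * (smult A (p t i) + smult B (p t j)) * (smult C (p t k) + smult D (p t l)) =
     smult (A * C) (Xp * p t i * p t k) + smult (A * D) (Xp * p t i * p t l)
   + smult (B * C) (Xp * p t j * p t k) + smult (B * D) (Xp * p t j * p t l)"
    by (simp add: algebra_simps)
  then show ?thesis by (simp add: Lf_add Lf_smult)
qed

lemma Lf_sq2:
  assumes "i \<noteq> j"
  shows "Lf t ((smult A (p t i) + smult B (p t j)) * (smult A (p t i) + smult B (p t j))) = A ^ 2 + B ^ 2"
proof -
  have "(smult A (p t i) + smult B (p t j)) * (smult A (p t i) + smult B (p t j)) =
        smult (A * A) (p t i * p t i) + smult (A * B) (p t i * p t j) + smult (B * A) (p t j * p t i) + smult (B * B) (p t j * p t j)"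
    by (simp add: algebra_simps)
  then show ?thesis using assms by (simp add: Lf_add Lf_smult Lf_orth power2_eq_square)
qed

lemma k_deriv: "((\<lambda>s. coeff (p s n) n) has_real_derivative coeff (p t n) n * (a n t ^ 2 + a (n + 1) t ^ 2) / 2) (at t)"
proof -
  define D where "D = dP (\<lambda>s. p s n) n t"
  have pd: "pdiff (\<lambda>s. p s n) D t"
    unfolding D_def using diff_all[of n] deg_p by (intro pdiff_dP) auto
  have degD: "degree D \<le> n" using pdiff_degree[OF _ pd] deg_p by auto
  have pd2: "pdiff (\<lambda>s. p s n * p s n) (D * p t n + p t n * D) t" by (rule pdiff_mult[OF pd pd])
  have deg2: "degree (p s n * p s n) \<le> 2 * n" for s
    using deg_p by (intro order.trans[OF degree_mult_le]) auto
  have d1: "((\<lambda>s. Lf s (p s n * p s n)) has_real_derivative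
      Lf t (D * p t n + p t n * D) - Lf t ([:0, 0, 1:] * (p t n * p t n))) (at t)"
    by (rule Lf_pdiff[OF deg2 pd2])
  have "(\<lambda>s. Lf s (p s n * p s n)) = (\<lambda>s. 1)" by (simp add: Lf_orth)
  then have "((\<lambda>s. Lf s (p s n * p s n)) has_real_derivative 0) (at t)" by simp
  with d1 have z: "Lf t (D * p t n + p t n * D) - Lf t ([:0, 0, 1:] * (p t n * p t n)) = 0"
    using DERIV_unique by blast
  have e1: "Lf t (D * p t n + p t n * D) = 2 * (coeff D n / coeff (p t n) n)"
  proof -
    have "Lf t (D * p t n + p t n * D) = Lf t (D * p t n) + Lf t (D * p t n)"
      by (simp only: Lf_add mult.commute[of "p t n" D])
    then show ?thesis using Lf_top[OF degD, of t] by simp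
  qed
  have "[:0, 0, 1:] * (p t n * p t n) = (Xp * p t n) * (Xp * p t n)"
    by (simp add: Xp_def algebra_simps)
  then have e2: "Lf t ([:0, 0, 1:] * (p t n * p t n)) = a (n + 1) t ^ 2 + a n t ^ 2"
    unfolding xp by (simp add: Lf_sq2)
  have kd: "coeff (p t n) n > 0" by (rule lc_p)
  have cD: "coeff D n = coeff (p t n) n * (a n t ^ 2 + a (n + 1) t ^ 2) / 2"
    using z e1 e2 kd by (simp add: field_simps)
  show ?thesis using pd unfolding pdiff_def cD[symmetric] by blast
qed

lemma coeff_pCons0: "n \<ge> 1 \<Longrightarrow> coeff (pCons 0 q) n = coeff q (n - 1)"
  by (cases n) auto

lemma a_ratio: "n \<ge> 1 \<Longrightarrow> a n s = coeff (p s (n - 1)) (n - 1) / coeff (p s n) n"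
proof -
  assume n: "n \<ge> 1"
  have r: "smult (a n s) (p s n) = [:0, 1:] * p s (n - 1) - smult (a (n - 1) s) (p s (n - 1 - 1))"
    using recur[of "n - 1" s] n by simp
  have "coeff (p s (n - 1 - 1)) n = 0" using deg_p n by (intro coeff_eq_0) auto
  then have "a n s * coeff (p s n) n = coeff (p s (n - 1)) (n - 1)"
    using arg_cong[OF r, of "\<lambda>q. coeff q n"] n by (simp add: coeff_pCons0)
  then show ?thesis using lc_p[of s n] by (simp add: field_simps)
qed

lemma toda: "(a n has_real_derivative a n t * (a (n - 1) t ^ 2 - a (n + 1) t ^ 2) / 2) (at t)"
proof (cases "n = 0")
  case True
  have "a 0 = (\<lambda>s. 0)" using a0 by auto
  then show ?thesis using True by (simp add: a0)
next
  case False
  then have n: "n \<ge> 1" by simp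
  have eq: "a n = (\<lambda>s. coeff (p s (n - 1)) (n - 1) / coeff (p s n) n)" using a_ratio[OF n] by auto
  have k1: "((\<lambda>s. coeff (p s (n - 1)) (n - 1)) has_real_derivative coeff (p t (n - 1)) (n - 1) * (a (n - 1) t ^ 2 + a n t ^ 2) / 2) (at t)"
    using k_deriv[of "n - 1" t] n by simp
  note k2 = k_deriv[of n t]
  have kn: "coeff (p t n) n > 0" by (rule lc_p)
  have d: "((\<lambda>s. coeff (p s (n - 1)) (n - 1) / coeff (p s n) n) has_real_derivative
     ((coeff (p t (n - 1)) (n - 1) * (a (n - 1) t ^ 2 + a n t ^ 2) / 2) * coeff (p t n) n
      - coeff (p t (n - 1)) (n - 1) * (coeff (p t n) n * (a n t ^ 2 + a (n + 1) t ^ 2) / 2))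
      / (coeff (p t n) n * coeff (p t n) n)) (at t)"
    using kn by (intro DERIV_divide k1 k2) auto
  then have "(a n has_real_derivative
     ((coeff (p t (n - 1)) (n - 1) * (a (n - 1) t ^ 2 + a n t ^ 2) / 2) * coeff (p t n) n
      - coeff (p t (n - 1)) (n - 1) * (coeff (p t n) n * (a n t ^ 2 + a (n + 1) t ^ 2) / 2))
      / (coeff (p t n) n * coeff (p t n) n)) (at t)"
    using eq by metis
  moreover have "((coeff (p t (n - 1)) (n - 1) * (a (n - 1) t ^ 2 + a n t ^ 2) / 2) * coeff (p t n) n
      - coeff (p t (n - 1)) (n - 1) * (coeff (p t n) n * (a n t ^ 2 + a (n + 1) t ^ 2) / 2))
      / (coeff (p t n) n * coeff (p t n) n) = a n t * (a (n - 1) t ^ 2 - a (n + 1) t ^ 2) / 2"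
  proof -
    have kk: "coeff (p t (n - 1)) (n - 1) = a n t * coeff (p t n) n"
      using kn a_ratio[OF n, of t] by (simp add: field_simps)
    show ?thesis unfolding kk using kn by (simp add: field_simps power2_eq_square)
  qed
  ultimately show ?thesis by (rule DERIV_cong)
qed

end

context freud
begin

lemma V_eq: "[:0, 2 * t, 0, 1:] = Xp * Xp * Xp + smult (2 * t) Xp"
  by (simp add: Xp_def)

lemma freud_eq: "a n t ^ 2 * (a (n - 1) t ^ 2 + a n t ^ 2 + a (n + 1) t ^ 2) + 2 * t * a n t ^ 2 = real n"
proof (cases "n = 0")
  case True
  then show ?thesis by (simp add: a0)
next
  case False
  then have n: "n \<ge> 1" by simp
  have ib: "Lf t (pderiv (p t n * p t (n - 1))) = Lf t (p t n * p t (n - 1) * [:0, 2 * t, 0, 1:])"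
    by (rule ibp)
  have pd: "pderiv (p t n * p t (n - 1)) = pderiv (p t n) * p t (n - 1) + pderiv (p t (n - 1)) * p t n"
    by (simp add: pderiv_mult algebra_simps)
  have dpn: "degree (pderiv (p t n)) \<le> n - 1" by (simp add: degree_pderiv deg_p)
  have dpn1: "degree (pderiv (p t (n - 1))) < n" using n by (simp add: degree_pderiv deg_p)
  have L1: "Lf t (pderiv (p t n) * p t (n - 1)) = coeff (pderiv (p t n)) (n - 1) / coeff (p t (n - 1)) (n - 1)"
    by (rule Lf_top[OF dpn])
  have cpd: "coeff (pderiv (p t n)) (n - 1) = real n * coeff (p t n) n"
    using n by (simp add: coeff_pderiv)
  have kk: "coeff (p t (n - 1)) (n - 1) = a n t * coeff (p t n) n"
    using a_ratio[OF n, of t] lc_p[of t n] by (simp add: field_simps)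
  have an: "a n t > 0" using apos n by simp
  have kn: "coeff (p t n) n > 0" by (rule lc_p)
  have LHS: "Lf t (pderiv (p t n * p t (n - 1))) = real n / a n t"
    unfolding pd Lf_add L1 orth_low[OF dpn1] cpd kk using kn by simp
  have "p t n * p t (n - 1) * [:0, 2 * t, 0, 1:] =
        Xp * (Xp * p t (n + 1 - 1)) * (Xp * p t (n - 1)) + smult (2 * t) (Xp * p t n * p t (n - 1))"
    unfolding V_eq by (simp add: algebra_simps)
  also have "\<dots> = Xp * (smult (a (n + 1) t) (p t (n + 1)) + smult (a n t) (p t (n - 1)))
                     * (smult (a n t) (p t n) + smult (a (n - 1) t) (p t (n - 1 - 1)))
                  + smult (2 * t) (Xp * p t n * p t (n - 1))"
    using xp[of t n] xp[of t "n - 1"] n by simp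
  finally have RHSeq: "Lf t (p t n * p t (n - 1) * [:0, 2 * t, 0, 1:]) =
      a (n + 1) t * a n t * Lf t (Xp * p t (n + 1) * p t n) + a (n + 1) t * a (n - 1) t * Lf t (Xp * p t (n + 1) * p t (n - 1 - 1))
    + a n t * a n t * Lf t (Xp * p t (n - 1) * p t n) + a n t * a (n - 1) t * Lf t (Xp * p t (n - 1) * p t (n - 1 - 1))
    + 2 * t * Lf t (Xp * p t n * p t (n - 1))"
    by (simp only: Lf_add Lf_smult Lf_xpp4)
  have J1: "Lf t (Xp * p t (n + 1) * p t n) = a (n + 1) t" by (simp add: Lf_xpp)
  have J2: "Lf t (Xp * p t (n + 1) * p t (n - 1 - 1)) = 0" using n by (simp add: Lf_xpp) arith
  have J3: "Lf t (Xp * p t (n - 1) * p t n) = a n t" using n by (simp add: Lf_xpp)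
  have J4: "a (n - 1) t * Lf t (Xp * p t (n - 1) * p t (n - 1 - 1)) = a (n - 1) t ^ 2"
  proof (cases "n = 1")
    case True
    then show ?thesis by (simp add: a0)
  next
    case False
    then have "n \<ge> 2" using n by simp
    then have "Lf t (Xp * p t (n - 1) * p t (n - 1 - 1)) = a (n - 1) t" by (simp add: Lf_xpp) arith
    then show ?thesis by (simp add: power2_eq_square)
  qed
  have J5: "Lf t (Xp * p t n * p t (n - 1)) = a n t" using n by (simp add: Lf_xpp)
  have "real n / a n t = a n t * (a (n - 1) t ^ 2 + a n t ^ 2 + a (n + 1) t ^ 2) + 2 * t * a n t"
    using ib LHS RHSeq J1 J2 J3 J4 J5 by (simp add: algebra_simps power2_eq_square)
  then show ?thesis using an by (simp add: field_simps power2_eq_square)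
qed

lemma deriv_a: "deriv (a k) = (\<lambda>s. a k s * (a (k - 1) s ^ 2 - a (k + 1) s ^ 2) / 2)"
  using toda DERIV_imp_deriv by blast

lemma main:
  assumes n: "n \<ge> 1"
  shows "a n t ^ 2 * (a (n - 1) t ^ 2 + a n t ^ 2 + a (n + 1) t ^ 2) + 2 * t * a n t ^ 2 = real n \<and>
         (a n has_real_derivative deriv (a n) t) (at t) \<and>
         (deriv (a n) has_real_derivative deriv (deriv (a n)) t) (at t) \<and>
         4 * a n t ^ 3 * deriv (deriv (a n)) t
           = (3 * a n t ^ 4 + 2 * t * a n t ^ 2 - real n) * (a n t ^ 4 + 2 * t * a n t ^ 2 + real n) \<and>
         (let u = (\<lambda>s. a n s ^ 2); \<alpha> = - real n / 2; \<beta> = - (real n ^ 2) / 2 in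
           (u has_real_derivative deriv u t) (at t) \<and>
           (deriv u has_real_derivative deriv (deriv u) t) (at t) \<and>
           deriv (deriv u) t = (deriv u t) ^ 2 / (2 * u t) + 3 * u t ^ 3 / 2 + 4 * t * u t ^ 2
                               + 2 * (t ^ 2 - \<alpha>) * u t + \<beta> / u t)"
proof -
  define x0 where "x0 = a (n - 1 - 1) t"
  define x1 where "x1 = a (n - 1) t"
  define x2 where "x2 = a n t"
  define x3 where "x3 = a (n + 1) t"
  define x4 where "x4 = a (n + 1 + 1) t"
  define N where "N = real n"
  have F1: "x2 ^ 2 * (x1 ^ 2 + x2 ^ 2 + x3 ^ 2) + 2 * t * x2 ^ 2 = N"
    unfolding x1_def x2_def x3_def N_def by (rule freud_eq)
  have F0: "x1 ^ 2 * (x0 ^ 2 + x1 ^ 2 + x2 ^ 2) + 2 * t * x1 ^ 2 = N - 1"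
    using freud_eq[of "n - 1" t] n unfolding x0_def x1_def x2_def N_def by (simp add: of_nat_diff)
  have F2: "x3 ^ 2 * (x2 ^ 2 + x3 ^ 2 + x4 ^ 2) + 2 * t * x3 ^ 2 = N + 1"
    using freud_eq[of "n + 1" t] unfolding x2_def x3_def x4_def N_def by simp
  have x2pos: "x2 > 0" unfolding x2_def using apos n by simp
  have t1: "(a n has_real_derivative x2 * (x1 ^ 2 - x3 ^ 2) / 2) (at t)"
    unfolding x1_def x2_def x3_def by (rule toda)
  have t0: "(a (n - 1) has_real_derivative x1 * (x0 ^ 2 - x2 ^ 2) / 2) (at t)"
    using toda[of "n - 1" t] n unfolding x0_def x1_def x2_def by simp
  have t2: "(a (n + 1) has_real_derivative x3 * (x2 ^ 2 - x4 ^ 2) / 2) (at t)"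
    using toda[of "n + 1" t] unfolding x2_def x3_def x4_def by simp
  define T where "T = x2 * (x1 ^ 2 - x3 ^ 2) / 2"
  define E where "E = (T * (x1 ^ 2 - x3 ^ 2) + x2 * (2 * x1 * (x1 * (x0 ^ 2 - x2 ^ 2) / 2) - 2 * x3 * (x3 * (x2 ^ 2 - x4 ^ 2) / 2))) / 2"
  have dT: "T = deriv (a n) t" unfolding T_def x1_def x2_def x3_def deriv_a by simp
  have dE0: "((\<lambda>s. a n s * (a (n - 1) s ^ 2 - a (n + 1) s ^ 2) / 2) has_real_derivative E) (at t)"
    unfolding E_def T_def
    apply (rule derivative_eq_intros t0 t1 t2 refl)+
    apply (unfold x0_def x1_def x2_def x3_def x4_def)
    apply (simp_all add: field_simps power2_eq_square)
    done
  have dE: "(deriv (a n) has_real_derivative E) (at t)" unfolding deriv_a by (rule dE0)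
  have ddE: "deriv (deriv (a n)) t = E" by (rule DERIV_imp_deriv[OF dE])
  have key: "4 * x2 ^ 3 * E = (3 * x2 ^ 4 + 2 * t * x2 ^ 2 - N) * (x2 ^ 4 + 2 * t * x2 ^ 2 + N)"
  proof -
    have e1: "4 * x2 ^ 3 * E = x2^4 * (x1^2 - x3^2)^2 + 2 * x2^4 * (x1^2*(x0^2 - x2^2) - x3^2*(x2^2 - x4^2))"
      unfolding E_def T_def by (simp add: field_simps power2_eq_square) algebra
    have e2: "(x2^4 * (x1^2 - x3^2)^2 + 2 * x2^4 * (x1^2*(x0^2 - x2^2) - x3^2*(x2^2 - x4^2)))
        - (3 * x2 ^ 4 + 2 * t * x2^2 - N) * (x2 ^ 4 + 2 * t * x2^2 + N)
      = 2 * x2^4 * ((x1^2 * (x0^2 + x1^2 + x2^2) + 2 * t * x1^2 - (N - 1)) + (x3^2 * (x2^2 + x3^2 + x4^2) + 2 * t * x3^2 - (N + 1)))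
        - (x2^2 * (x1^2 + x2^2 + x3^2) + 2 * t * x2^2 - N) * (N + (x2^2 * (x1^2 + x3^2) + x2^4 + 2 * t * x2^2) + 2 * x2^4)"
      by algebra
    have "(x2^4 * (x1^2 - x3^2)^2 + 2 * x2^4 * (x1^2*(x0^2 - x2^2) - x3^2*(x2^2 - x4^2)))
        - (3 * x2 ^ 4 + 2 * t * x2^2 - N) * (x2 ^ 4 + 2 * t * x2^2 + N) = 0"
      unfolding e2 using F0 F1 F2 by simp
    then show ?thesis unfolding e1 by simp
  qed
  define u where "u = (\<lambda>s. a n s ^ 2)"
  have du0: "(u has_real_derivative 2 * x2 * T) (at t)"
    unfolding u_def T_def using t1 by (auto intro!: derivative_eq_intros simp: x2_def)
  have du_fun: "deriv u = (\<lambda>s. 2 * a n s * deriv (a n) s)"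
  proof
    fix s
    have dv: "deriv (a n) s = a n s * (a (n - 1) s ^ 2 - a (n + 1) s ^ 2) / 2"
      by (rule DERIV_imp_deriv[OF toda])
    have d: "(a n has_real_derivative deriv (a n) s) (at s)" unfolding dv by (rule toda)
    have "(u has_real_derivative of_nat 2 * (deriv (a n) s * a n s ^ (2 - Suc 0))) (at s)"
      unfolding u_def by (rule DERIV_power[OF d])
    then have "(u has_real_derivative 2 * a n s * deriv (a n) s) (at s)"
      by (rule DERIV_cong) simp
    then show "deriv u s = 2 * a n s * deriv (a n) s" by (rule DERIV_imp_deriv)
  qed
  have ddu0: "(deriv u has_real_derivative 2 * T * T + 2 * x2 * E) (at t)"
    unfolding du_fun using t1 dE dT
    by (auto intro!: derivative_eq_intros simp: x2_def T_def algebra_simps)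
  have PIV: "2 * T * T + 2 * x2 * E = (2 * x2 * T) ^ 2 / (2 * x2 ^ 2) + 3 * (x2 ^ 2) ^ 3 / 2 + 4 * t * (x2 ^ 2) ^ 2
              + 2 * (t ^ 2 - - N / 2) * x2 ^ 2 + - (N ^ 2) / 2 / x2 ^ 2"
  proof -
    have a: "(2 * x2 * T) ^ 2 / (2 * x2 ^ 2) = 2 * T * T" using x2pos by (simp add: field_simps power2_eq_square)
    have b: "2 * x2 * E = ((3 * x2 ^ 4 + 2 * t * x2 ^ 2 - N) * (x2 ^ 4 + 2 * t * x2 ^ 2 + N)) / (2 * x2 ^ 2)"
      using key x2pos by (simp add: field_simps power2_eq_square eval_nat_numeral)
    have c: "((3 * x2 ^ 4 + 2 * t * x2 ^ 2 - N) * (x2 ^ 4 + 2 * t * x2 ^ 2 + N)) / (2 * x2 ^ 2)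
       = 3 * (x2 ^ 2) ^ 3 / 2 + 4 * t * (x2 ^ 2) ^ 2 + 2 * (t ^ 2 - - N / 2) * x2 ^ 2 + - (N ^ 2) / 2 / x2 ^ 2"
      using x2pos by (simp add: field_simps) algebra
    show ?thesis using a b c by simp
  qed
  have uT: "deriv u t = 2 * x2 * T" by (rule DERIV_imp_deriv[OF du0])
  have uu: "deriv (deriv u) t = 2 * T * T + 2 * x2 * E" by (rule DERIV_imp_deriv[OF ddu0])
  have ut: "u t = x2 ^ 2" by (simp add: u_def x2_def)
  show ?thesis
    unfolding Let_def u_def[symmetric]
    using F1 t1 dE ddE key du0 ddu0 PIV uT uu ut dT
    by (simp add: x1_def x2_def x3_def N_def DERIV_imp_deriv)
qed

end

theorem mainTheorem12:
  fixes p :: "real \<Rightarrow> nat \<Rightarrow> real poly"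
    and a :: "nat \<Rightarrow> real \<Rightarrow> real"
  assumes orth: "\<And>t. orthonormal_system t (p t)"
    and a0: "\<And>t. a 0 t = 0"
    and apos: "\<And>n t. n \<ge> 1 \<Longrightarrow> a n t > 0"
    and recur: "\<And>n t. smult (a (n + 1) t) (p t (n + 1))
                   = [:0, 1:] * p t n - smult (a n t) (p t (n - 1))"
    and n: "n \<ge> 1"
  shows "a n t ^ 2 * (a (n - 1) t ^ 2 + a n t ^ 2 + a (n + 1) t ^ 2) + 2 * t * a n t ^ 2 = real n \<and>
         (a n has_real_derivative deriv (a n) t) (at t) \<and>
         (deriv (a n) has_real_derivative deriv (deriv (a n)) t) (at t) \<and>
         4 * a n t ^ 3 * deriv (deriv (a n)) t
           = (3 * a n t ^ 4 + 2 * t * a n t ^ 2 - real n) * (a n t ^ 4 + 2 * t * a n t ^ 2 + real n) \<and>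
         (let u = (\<lambda>s. a n s ^ 2); \<alpha> = - real n / 2; \<beta> = - (real n ^ 2) / 2 in
           (u has_real_derivative deriv u t) (at t) \<and>
           (deriv u has_real_derivative deriv (deriv u) t) (at t) \<and>
           deriv (deriv u) t = (deriv u t) ^ 2 / (2 * u t) + 3 * u t ^ 3 / 2 + 4 * t * u t ^ 2
                               + 2 * (t ^ 2 - \<alpha>) * u t + \<beta> / u t)"
proof -
  interpret freud p a
    by unfold_locales (fact orth a0 apos recur)+
  show ?thesis by (rule main[OF n])
qed

end
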